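(* In the resource theory of unital maps on a $d$-dimensional Hilbert space, with the currency $\mathcal C=\{C^k\}_{k=1}^d\cup\{\Omega\}$, $C^k=\{\Pi^k/k\}$, $\mathrm{Val}(C^k)=\log d-\log k$, $\mathrm{Val}(\Omega)=0$, the cost of any specification $V\in S^\Omega$ is $$\mathrm{Cost}(V)=\inf_{\rho\in V}\log\frac{d}{\lfloor\lambda_{\max}(\rho)^{-1}\rfloor}=\log d-\sup_{\rho\in V}\log\big\lfloor 2^{H_{\min}(\rho)}\big\rfloor.$$
   Context: $\Omega$ is the set of all density operators on a Hilbert space $\mathcal H$ of dimension $d$ with fixed orthonormal basis $\{\ket i\}_{i=1}^d$; $S^\Omega$ is the set of non-empty subsets of $\Omega$; $\Pi^k=\sum_{i=1}^k\ket i\bra i$. Allowed transformations: $f_{\mathcal E}(V)=\{\mathcal E(\rho):\rho\in V\}$ for unital CPTP maps $\mathcal E$; $V\to W$ iff some unital CPTP $\mathcal E$ has $\mathcal E(\rho)\in W$ for all $\rho\in V$. $\mathrm{Cost}(V)=\inf\{\mathrm{Val}(C):C\in\mathcal C,\ C\to V\}$. $\lambda_{\max}(\rho)$ is the largest eigenvalue of $\rho$, $H_{\min}(\rho)=-\log\lambda_{\max}(\rho)$, $\lfloor\cdot\rfloor$ is the floor function, and logarithms are base 2. *)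

theory Defs
  imports Complex_Main "Jordan_Normal_Form.Char_Poly"
begin

(* Matrices over C of size d x d represent operators on C^d with the standard
   basis |i>, i = 0..d-1 (corresponding to |1>,...,|d> in the paper). *)

definition adj :: "complex mat \<Rightarrow> complex mat" where
  "adj A = mat (dim_col A) (dim_row A) (\<lambda>(i,j). cnj (A $$ (j,i)))"

definition mtrace :: "complex mat \<Rightarrow> complex" where
  "mtrace A = (\<Sum>i<dim_row A. A $$ (i,i))"

definition psd :: "nat \<Rightarrow> complex mat \<Rightarrow> bool" where
  "psd d A \<longleftrightarrow> A \<in> carrier_mat d d \<and> adj A = A \<and>
     (\<forall>v \<in> carrier_vec d. 0 \<le> Re ((A *\<^sub>v v) \<bullet>c v))"

definition density :: "nat \<Rightarrow> complex mat \<Rightarrow> bool" where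
  "density d \<rho> \<longleftrightarrow> psd d \<rho> \<and> mtrace \<rho> = 1"

definition Omega :: "nat \<Rightarrow> complex mat set" where
  "Omega d = {\<rho>. density d \<rho>}"

definition msum :: "nat \<Rightarrow> nat \<Rightarrow> (nat \<Rightarrow> complex mat) \<Rightarrow> complex mat" where
  "msum d n f = foldr (\<lambda>i acc. f i + acc) [0..<n] (0\<^sub>m d d)"

(* unital CPTP map on d x d matrices, given by a Kraus representation
   E(\<rho>) = \<Sum> K_i \<rho> K_i^\<dagger>, with \<Sum> K_i^\<dagger> K_i = I (trace preserving)
   and \<Sum> K_i K_i^\<dagger> = I (unital) *)
definition unital_cptp :: "nat \<Rightarrow> (complex mat \<Rightarrow> complex mat) \<Rightarrow> bool" where
  "unital_cptp d E \<longleftrightarrow> (\<exists>(n::nat) (K :: nat \<Rightarrow> complex mat).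
      (\<forall>i<n. K i \<in> carrier_mat d d) \<and>
      msum d n (\<lambda>i. adj (K i) * K i) = 1\<^sub>m d \<and>
      msum d n (\<lambda>i. K i * adj (K i)) = 1\<^sub>m d \<and>
      (\<forall>\<rho> \<in> carrier_mat d d. E \<rho> = msum d n (\<lambda>i. K i * \<rho> * adj (K i))))"

definition converts :: "nat \<Rightarrow> complex mat set \<Rightarrow> complex mat set \<Rightarrow> bool" where
  "converts d V W \<longleftrightarrow> (\<exists>E. unital_cptp d E \<and> (\<forall>\<rho>\<in>V. E \<rho> \<in> W))"

definition Pi_proj :: "nat \<Rightarrow> nat \<Rightarrow> complex mat" where
  "Pi_proj d k = mat d d (\<lambda>(i,j). if i = j \<and> i < k then 1 else 0)"

definition currency :: "nat \<Rightarrow> (complex mat set \<times> real) set" where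
  "currency d = {({(1 / complex_of_nat k) \<cdot>\<^sub>m Pi_proj d k}, log 2 (real d) - log 2 (real k)) | k.
                    1 \<le> k \<and> k \<le> d} \<union> {(Omega d, 0)}"

definition Cost :: "nat \<Rightarrow> complex mat set \<Rightarrow> real" where
  "Cost d V = Inf {v. \<exists>C. (C, v) \<in> currency d \<and> converts d C V}"

(* largest eigenvalue (eigenvalues of density operators are real) *)
definition lambda_max :: "complex mat \<Rightarrow> real" where
  "lambda_max \<rho> = Max {Re l | l. eigenvalue \<rho> l}"

definition Hmin :: "complex mat \<Rightarrow> real" where
  "Hmin \<rho> = - log 2 (lambda_max \<rho>)"

end

theory Submission
  imports Defs
begin

lemma adj_dims[simp]: "dim_row (adj A) = dim_col A" "dim_col (adj A) = dim_row A"
  by (auto simp: adj_def)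

lemma adj_carrier[simp]: "A \<in> carrier_mat n m \<Longrightarrow> adj A \<in> carrier_mat m n"
  by (auto simp: adj_def)

lemma adj_index[simp]: "i < dim_col A \<Longrightarrow> j < dim_row A \<Longrightarrow> adj A $$ (i,j) = cnj (A $$ (j,i))"
  by (auto simp: adj_def)

lemma adj_adj[simp]: "adj (adj A) = A"
  by (rule eq_matI, auto)

lemma mult_entry: "A \<in> carrier_mat n m \<Longrightarrow> B \<in> carrier_mat m p \<Longrightarrow> i < n \<Longrightarrow> j < p \<Longrightarrow>
   (A * B) $$ (i,j) = (\<Sum>k<m. A $$ (i,k) * B $$ (k,j))"
  by (auto simp: scalar_prod_def atLeast0LessThan)

lemma adj_mult: assumes "A \<in> carrier_mat n m" "B \<in> carrier_mat m p"
  shows "adj (A * B) = adj B * adj A"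
proof (rule eq_matI)
  fix i j assume "i < dim_row (adj B * adj A)" "j < dim_col (adj B * adj A)"
  then show "adj (A * B) $$ (i, j) = (adj B * adj A) $$ (i, j)"
  proof -
    have ij: "i < p" "j < n" using \<open>i < dim_row (adj B * adj A)\<close> \<open>j < dim_col (adj B * adj A)\<close> assms by auto
    have "(adj B * adj A) $$ (i, j) = (\<Sum>k<m. adj B $$ (i,k) * adj A $$ (k,j))"
      by (rule mult_entry[of _ p m _ n], use assms ij in auto)
    also have "\<dots> = (\<Sum>k<m. cnj (A $$ (j,k) * B $$ (k,i)))"
      using assms ij by (auto simp: mult.commute)
    also have "\<dots> = cnj ((A * B) $$ (j,i))"
      by (subst mult_entry[of _ n m _ p], use assms ij in auto)
    also have "\<dots> = adj (A * B) $$ (i, j)" using assms ij by auto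
    finally show ?thesis by simp
  qed
qed (use assms in auto)

lemma adj_one[simp]: "adj (1\<^sub>m n) = 1\<^sub>m n"
  by (rule eq_matI, auto)

lemma foldr_entry:
  assumes "\<forall>i\<in>set xs. f i \<in> carrier_mat d d" "z \<in> carrier_mat d d"
  shows "foldr (\<lambda>i acc. f i + acc) xs z \<in> carrier_mat d d \<and>
    (\<forall>a<d. \<forall>b<d. foldr (\<lambda>i acc. f i + acc) xs z $$ (a,b) = sum_list (map (\<lambda>i. f i $$ (a,b)) xs) + z $$ (a,b))"
  using assms by (induction xs) (auto simp: add.assoc)

lemma msum_carrier: "(\<And>i. i < n \<Longrightarrow> f i \<in> carrier_mat d d) \<Longrightarrow> msum d n f \<in> carrier_mat d d"
  unfolding msum_def using foldr_entry[of "[0..<n]" f d "0\<^sub>m d d"] by auto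

lemma msum_index: "(\<And>i. i < n \<Longrightarrow> f i \<in> carrier_mat d d) \<Longrightarrow> a < d \<Longrightarrow> b < d \<Longrightarrow>
   msum d n f $$ (a,b) = (\<Sum>i<n. f i $$ (a,b))"
  unfolding msum_def using foldr_entry[of "[0..<n]" f d "0\<^sub>m d d"]
  by (auto simp: sum_set_upt_conv_sum_list_nat[symmetric] atLeast0LessThan)


lemma sum_delta_l: assumes "a < (n::nat)" shows "(\<Sum>k<n. (if a = k then 1 else 0) * (f k :: complex)) = f a"
proof -
  have "\<And>k. (if a = k then 1 else 0) * f k = (if a = k then f k else 0)" by simp
  then show ?thesis using assms by (simp add: sum.delta)
qed
lemma sum_delta_r: assumes "a < (n::nat)" shows "(\<Sum>k<n. (f k :: complex) * (if k = a then 1 else 0)) = f a"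
proof -
  have "\<And>k. f k * (if k = a then 1 else 0) = (if k = a then f k else 0)" by simp
  then show ?thesis using assms by (simp add: sum.delta')
qed

lemma householder:
  fixes u :: "complex vec" and r :: real
  assumes u: "u \<in> carrier_vec n" and n: "0 < n" and nu: "(\<Sum>k<n. (cmod (u$k))^2) = 1"
    and u0: "u$0 = of_real r"
  shows "\<exists>H. H \<in> carrier_mat n n \<and> adj H = H \<and> H * H = 1\<^sub>m n \<and> (\<forall>a<n. H $$ (a,0) = u$a)"
proof (cases "\<forall>k<n. u$k = (if k = 0 then 1 else 0)")
  case True
  then show ?thesis by (intro exI[of _ "1\<^sub>m n"]) auto
next
  case False
  define w where "w k = u$k - (if k=0 then 1 else 0)" for k
  obtain n' where n': "n = Suc n'" using n by (cases n) auto
  define N where "N = (\<Sum>k<n. (cmod (w k))^2)"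
  have "N = (cmod (w 0))^2 + (\<Sum>k<n'. (cmod (u $ Suc k))^2)"
    unfolding N_def n' sum.lessThan_Suc_shift by (simp add: w_def)
  also have "(cmod (w 0))^2 = (r - 1)^2"
  proof -
    have "w 0 = complex_of_real (r - 1)" unfolding w_def u0 by simp
    then show "(cmod (w 0))^2 = (r - 1)^2" by (simp only: norm_of_real power2_abs)
  qed
  also have "(\<Sum>k<n'. (cmod (u $ Suc k))^2) = 1 - r^2"
    using nu unfolding n' sum.lessThan_Suc_shift u0 by simp
  finally have N: "N = 2 - 2 * r" by (simp add: power2_eq_square algebra_simps)
  obtain k0 where k0: "k0 < n" "w k0 \<noteq> 0" using False unfolding w_def by auto
  have "0 < (cmod (w k0))^2" using k0 by simp
  also have "\<dots> \<le> N" unfolding N_def by (rule member_le_sum, use k0 in auto)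
  finally have Npos: "0 < N" .
  define c where "c = complex_of_real (2 / N)"
  have cr: "c * complex_of_real (r - 1) = -1" unfolding c_def N using Npos N
    by (simp flip: of_real_mult) (simp add: field_simps)
  have Nsum: "(\<Sum>k<n. cnj (w k) * w k) = complex_of_real N"
    unfolding N_def of_real_sum by (rule sum.cong, simp, metis complex_norm_square mult.commute)
  have ccN: "c * c * complex_of_real N = 2 * c" unfolding c_def using Npos
    by (simp flip: of_real_mult) (simp add: field_simps)
  define H where "H = mat n n (\<lambda>(a,b). (if a = b then 1 else 0) - c * w a * cnj (w b))"
  have H: "H \<in> carrier_mat n n" unfolding H_def by auto
  have "adj H = H"
    by (rule eq_matI, auto simp: H_def c_def)
  moreover have "\<forall>a<n. H $$ (a,0) = u$a"
  proof (intro allI impI)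
    fix a assume a: "a < n"
    have w0: "cnj (w 0) = complex_of_real (r - 1)" unfolding w_def u0 by simp
    have "H $$ (a,0) = (if a = 0 then 1 else 0) - c * w a * cnj (w 0)"
      using a n by (simp add: H_def)
    also have "\<dots> = (if a = 0 then 1 else 0) - w a * (c * complex_of_real (r - 1))"
      unfolding w0 by (simp add: ac_simps)
    also have "\<dots> = u $ a" unfolding cr by (simp add: w_def)
    finally show "H $$ (a,0) = u$a" .
  qed
  moreover have "H * H = 1\<^sub>m n"
  proof (rule eq_matI)
    fix a b assume "a < dim_row (1\<^sub>m n)" "b < dim_col (1\<^sub>m n)"
    then have ab: "a < n" "b < n" by auto
    have "(H * H) $$ (a,b) = (\<Sum>k<n. ((if a = k then 1 else 0) - c * w a * cnj (w k)) *
                                      ((if k = b then 1 else 0) - c * w k * cnj (w b)))"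
      by (subst mult_entry[OF H H ab]) (rule sum.cong, auto simp: H_def ab)
    also have "\<dots> = (\<Sum>k<n. (if a = k then 1 else 0) * ((if k = b then 1 else 0) - c * w k * cnj (w b)))
       - (\<Sum>k<n. (c * w a * cnj (w k)) * (if k = b then 1 else 0))
       + c * c * w a * cnj (w b) * (\<Sum>k<n. cnj (w k) * w k)"
      by (simp add: algebra_simps sum_subtractf sum.distrib sum_distrib_left)
    also have "\<dots> = (if a = b then 1 else 0) - 2 * c * w a * cnj (w b) + c * c * w a * cnj (w b) * complex_of_real N"
      unfolding Nsum sum_delta_l[OF ab(1)] sum_delta_r[OF ab(2)] by simp
    also have "\<dots> = (if a = b then 1 else 0)"
      using ccN by (simp add: algebra_simps, blast)
    also have "\<dots> = 1\<^sub>m n $$ (a,b)" using ab by simp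
    finally show "(H * H) $$ (a,b) = 1\<^sub>m n $$ (a,b)" .
  qed (auto simp: H_def)
  ultimately show ?thesis using H by blast
qed


definition diagm :: "nat \<Rightarrow> (nat \<Rightarrow> real) \<Rightarrow> complex mat" where
  "diagm n lam = mat n n (\<lambda>(i,j). if i = j then complex_of_real (lam i) else 0)"

definition unitary :: "nat \<Rightarrow> complex mat \<Rightarrow> bool" where
  "unitary n U \<longleftrightarrow> U \<in> carrier_mat n n \<and> adj U * U = 1\<^sub>m n \<and> U * adj U = 1\<^sub>m n"

lemma diagm_carrier[simp]: "diagm n lam \<in> carrier_mat n n"
  by (simp add: diagm_def)

lemma diagm_dims[simp]: "dim_row (diagm n lam) = n" "dim_col (diagm n lam) = n"
  by (simp_all add: diagm_def)

lemma adj_carrier_sq[simp]: "A \<in> carrier_mat n n \<Longrightarrow> adj A \<in> carrier_mat n n"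
  by simp

lemma mult_carrier_sq[simp]: "A \<in> carrier_mat n n \<Longrightarrow> B \<in> carrier_mat n n \<Longrightarrow> A * B \<in> carrier_mat n n"
  by (rule mult_carrier_mat)

lemma UDU_carrier: "U \<in> carrier_mat n n \<Longrightarrow> U * diagm n lam * adj U \<in> carrier_mat n n"
  by (meson diagm_carrier adj_carrier mult_carrier_mat)

lemma UD_entry: assumes U: "U \<in> carrier_mat n n" and a: "a < n" and k: "k < n"
  shows "(U * diagm n lam) $$ (a,k) = U $$ (a,k) * complex_of_real (lam k)"
proof -
  have "(U * diagm n lam) $$ (a,k) = (\<Sum>j<n. U $$ (a,j) * diagm n lam $$ (j,k))"
    by (rule mult_entry[OF U diagm_carrier a k])
  also have "\<dots> = (\<Sum>j<n. if j = k then U $$ (a,j) * complex_of_real (lam j) else 0)"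
    by (rule sum.cong, auto simp: diagm_def k)
  also have "\<dots> = U $$ (a,k) * complex_of_real (lam k)" using k by simp
  finally show ?thesis .
qed

lemma UDU_entry: assumes U: "U \<in> carrier_mat n n" and a: "a < n" and b: "b < n"
  shows "(U * diagm n lam * adj U) $$ (a,b) = (\<Sum>k<n. U $$ (a,k) * complex_of_real (lam k) * cnj (U $$ (b,k)))"
proof -
  have UD: "U * diagm n lam \<in> carrier_mat n n" using U by simp
  show ?thesis
    by (subst mult_entry[OF UD adj_carrier[OF U] a b], rule sum.cong, use U a b UD_entry[OF U a] in auto)
qed

lemma adjU_U_entry: assumes U: "U \<in> carrier_mat n n" and a: "a < n" and b: "b < n"
  shows "(adj U * U) $$ (a,b) = (\<Sum>k<n. cnj (U $$ (k,a)) * U $$ (k,b))"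
  by (subst mult_entry[OF adj_carrier[OF U] U a b], rule sum.cong, use U a b in auto)

lemma U_adjU_entry: assumes U: "U \<in> carrier_mat n n" and a: "a < n" and b: "b < n"
  shows "(U * adj U) $$ (a,b) = (\<Sum>k<n. U $$ (a,k) * cnj (U $$ (b,k)))"
  by (subst mult_entry[OF U adj_carrier[OF U] a b], rule sum.cong, use U a b in auto)

lemma unitary_mult: assumes "unitary n A" "unitary n B" shows "unitary n (A * B)"
proof -
  have A: "A \<in> carrier_mat n n" "adj A * A = 1\<^sub>m n" "A * adj A = 1\<^sub>m n" using assms unfolding unitary_def by auto
  have B: "B \<in> carrier_mat n n" "adj B * B = 1\<^sub>m n" "B * adj B = 1\<^sub>m n" using assms unfolding unitary_def by auto
  have adjAB: "adj (A * B) = adj B * adj A" by (rule adj_mult[OF A(1) B(1)])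
  have e1: "adj A * (A * B) = B"
    using A B by (simp flip: assoc_mult_mat[of "adj A" n n A n B n])
  have "adj B * adj A * (A * B) = adj B * (adj A * (A * B))"
    using A B by (simp add: assoc_mult_mat[of _ n n _ n _ n])
  also have "\<dots> = 1\<^sub>m n" using A B e1 by simp
  finally have 1: "adj (A * B) * (A * B) = 1\<^sub>m n" unfolding adjAB .
  have e2: "B * (adj B * adj A) = adj A"
    using A B by (simp flip: assoc_mult_mat[of B n n "adj B" n "adj A" n])
  have C: "adj B * adj A \<in> carrier_mat n n" using A B by (auto intro!: mult_carrier_mat)
  have "A * B * (adj B * adj A) = A * (B * (adj B * adj A))"
    by (rule assoc_mult_mat[OF A(1) B(1) C])
  also have "\<dots> = 1\<^sub>m n" using A B e2 by simp
  finally have 2: "A * B * adj (A * B) = 1\<^sub>m n" unfolding adjAB .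
  show ?thesis using 1 2 A B unfolding unitary_def by auto
qed

definition ext1 :: "nat \<Rightarrow> complex mat \<Rightarrow> complex mat" where
  "ext1 m B = mat (Suc m) (Suc m) (\<lambda>(a,b). if a = 0 \<and> b = 0 then 1 else if a = 0 \<or> b = 0 then 0 else B $$ (a-1,b-1))"

lemma ext1_carrier[simp]: "ext1 m B \<in> carrier_mat (Suc m) (Suc m)"
  by (simp add: ext1_def)

lemma ext1_dims[simp]: "dim_row (ext1 m B) = Suc m" "dim_col (ext1 m B) = Suc m"
  by (simp_all add: ext1_def)

lemma ext1_entries[simp]: "ext1 m B $$ (0,0) = 1" "b < m \<Longrightarrow> ext1 m B $$ (0,Suc b) = 0"
  "a < m \<Longrightarrow> ext1 m B $$ (Suc a,0) = 0" "a < m \<Longrightarrow> b < m \<Longrightarrow> ext1 m B $$ (Suc a,Suc b) = B $$ (a,b)"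
  by (auto simp: ext1_def)

lemma ext1_0b: "b < Suc m \<Longrightarrow> ext1 m B $$ (0,b) = (if b = 0 then 1 else 0)"
  and ext1_a0: "a < Suc m \<Longrightarrow> ext1 m B $$ (a,0) = (if a = 0 then 1 else 0)"
  by (auto simp: ext1_def)

lemma ext1_unitary: assumes "unitary m B" shows "unitary (Suc m) (ext1 m B)"
proof -
  have B: "B \<in> carrier_mat m m" "adj B * B = 1\<^sub>m m" "B * adj B = 1\<^sub>m m" using assms unfolding unitary_def by auto
  have 1: "adj (ext1 m B) * ext1 m B = 1\<^sub>m (Suc m)"
  proof (rule eq_matI)
    fix a b assume "a < dim_row (1\<^sub>m (Suc m))" "b < dim_col (1\<^sub>m (Suc m))"
    then have ab: "a < Suc m" "b < Suc m" by auto
    show "(adj (ext1 m B) * ext1 m B) $$ (a, b) = 1\<^sub>m (Suc m) $$ (a, b)"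
    proof (cases a)
      case 0 then show ?thesis
        using ab by (subst adjU_U_entry[OF ext1_carrier ab], subst sum.lessThan_Suc_shift, simp add: ext1_0b ext1_a0)
    next
      case (Suc a')
      show ?thesis
      proof (cases b)
        case 0 then show ?thesis
          using ab Suc by (subst adjU_U_entry[OF ext1_carrier ab], subst sum.lessThan_Suc_shift, simp add: ext1_0b ext1_a0)
      next
        case (Suc b')
        have "(\<Sum>k<m. cnj (B $$ (k,a')) * B $$ (k,b')) = (adj B * B) $$ (a',b')"
          using ab \<open>a = Suc a'\<close> Suc by (subst adjU_U_entry[OF B(1)]) auto
        then show ?thesis
          using ab \<open>a = Suc a'\<close> Suc B
          by (subst adjU_U_entry[OF ext1_carrier ab], subst sum.lessThan_Suc_shift, simp add: ext1_0b ext1_a0)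
      qed
    qed
  qed auto
  have 2: "ext1 m B * adj (ext1 m B) = 1\<^sub>m (Suc m)"
  proof (rule eq_matI)
    fix a b assume "a < dim_row (1\<^sub>m (Suc m))" "b < dim_col (1\<^sub>m (Suc m))"
    then have ab: "a < Suc m" "b < Suc m" by auto
    show "(ext1 m B * adj (ext1 m B)) $$ (a, b) = 1\<^sub>m (Suc m) $$ (a, b)"
    proof (cases a)
      case 0 then show ?thesis
        using ab by (subst U_adjU_entry[OF ext1_carrier ab], subst sum.lessThan_Suc_shift, simp add: ext1_0b ext1_a0)
    next
      case (Suc a')
      show ?thesis
      proof (cases b)
        case 0 then show ?thesis
          using ab Suc by (subst U_adjU_entry[OF ext1_carrier ab], subst sum.lessThan_Suc_shift, simp add: ext1_0b ext1_a0)
      next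
        case (Suc b')
        have "(\<Sum>k<m. B $$ (a',k) * cnj (B $$ (b',k))) = (B * adj B) $$ (a',b')"
          using ab \<open>a = Suc a'\<close> Suc by (subst U_adjU_entry[OF B(1)]) auto
        then show ?thesis
          using ab \<open>a = Suc a'\<close> Suc B
          by (subst U_adjU_entry[OF ext1_carrier ab], subst sum.lessThan_Suc_shift, simp add: ext1_0b ext1_a0)
      qed
    qed
  qed auto
  show ?thesis using 1 2 unfolding unitary_def by auto
qed


lemma exists_eigen: fixes A :: "complex mat" assumes A: "A \<in> carrier_mat (Suc m) (Suc m)"
  shows "\<exists>e v. v \<in> carrier_vec (Suc m) \<and> v \<noteq> 0\<^sub>v (Suc m) \<and> A *\<^sub>v v = e \<cdot>\<^sub>v v"
proof -
  obtain as where as: "char_poly A = (\<Prod>a\<leftarrow>as. [:- a, 1:])" "length as = Suc m"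
    using char_poly_factorized[OF A] by blast
  then obtain a as' where "as = a # as'" by (cases as) auto
  then have "poly (char_poly A) a = 0" unfolding as(1) by simp
  then have "eigenvalue A a" using eigenvalue_root_char_poly[OF A] by simp
  then obtain v where "eigenvector A v a" unfolding eigenvalue_def by blast
  then show ?thesis unfolding eigenvector_def using A by auto
qed

lemma unit_eigen:
  assumes A: "A \<in> carrier_mat n n" and v: "v \<in> carrier_vec n" and v0: "v \<noteq> 0\<^sub>v n"
    and Av: "A *\<^sub>v v = e \<cdot>\<^sub>v v"
  shows "\<exists>u r. u \<in> carrier_vec n \<and> A *\<^sub>v u = e \<cdot>\<^sub>v u \<and> (\<Sum>k<n. (cmod (u$k))^2) = 1 \<and> u$0 = complex_of_real r"
proof -
  define s where "s = (\<Sum>k<n. (cmod (v$k))^2)"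
  obtain k0 where k0: "k0 < n" "v$k0 \<noteq> 0"
  proof -
    have "\<exists>k<n. v$k \<noteq> 0"
    proof (rule ccontr)
      assume "\<not> (\<exists>k<n. v$k \<noteq> 0)"
      then have "v = 0\<^sub>v n" using v by (intro eq_vecI) auto
      then show False using v0 by simp
    qed
    then show ?thesis using that by blast
  qed
  have "0 < (cmod (v$k0))^2" using k0 by simp
  also have "\<dots> \<le> s" unfolding s_def by (rule member_le_sum, use k0 in auto)
  finally have spos: "0 < s" .
  define p where "p = v$0"
  define ph where "ph = (if p = 0 then 1 else cnj p / complex_of_real (cmod p))"
  have cph: "cmod ph = 1" unfolding ph_def by (auto simp: norm_divide)
  define t where "t = ph / complex_of_real (sqrt s)"
  have ct: "cmod t = 1 / sqrt s" unfolding t_def using spos by (simp add: norm_divide cph)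
  define u where "u = t \<cdot>\<^sub>v v"
  have u: "u \<in> carrier_vec n" unfolding u_def using v by simp
  have "A *\<^sub>v u = t \<cdot>\<^sub>v (e \<cdot>\<^sub>v v)" unfolding u_def mult_mat_vec[OF A v] Av ..
  also have "\<dots> = e \<cdot>\<^sub>v u" unfolding u_def by (rule eq_vecI, auto simp: ac_simps)
  finally have Au: "A *\<^sub>v u = e \<cdot>\<^sub>v u" .
  have "(\<Sum>k<n. (cmod (u$k))^2) = (\<Sum>k<n. (cmod t)^2 * (cmod (v$k))^2)"
    by (rule sum.cong, use v in \<open>auto simp: u_def norm_mult power_mult_distrib\<close>)
  also have "\<dots> = (cmod t)^2 * s" unfolding s_def by (simp add: sum_distrib_left)
  also have "\<dots> = 1" unfolding ct using spos by (simp add: power_divide)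
  finally have nu: "(\<Sum>k<n. (cmod (u$k))^2) = 1" .
  have "0 < n" using k0 by simp
  then have u0: "u$0 = t * p" unfolding u_def p_def using v by simp
  have "\<exists>r. u$0 = complex_of_real r"
  proof (cases "p = 0")
    case True then show ?thesis using u0 by (intro exI[of _ 0]) simp
  next
    case False
    have "u$0 = (cnj p * p) / (complex_of_real (cmod p) * complex_of_real (sqrt s))"
      unfolding u0 t_def ph_def using False by simp
    also have "cnj p * p = complex_of_real ((cmod p)^2)" by (metis complex_norm_square mult.commute)
    finally have "u$0 = complex_of_real ((cmod p)^2 / (cmod p * sqrt s))" by simp
    then show ?thesis by blast
  qed
  then show ?thesis using u Au nu by blast
qed


lemma mult_unit_vec_index: assumes M: "(M :: complex mat) \<in> carrier_mat n n" and a: "a < n" and j: "j < n"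
  shows "(M *\<^sub>v unit_vec n j) $ a = M $$ (a,j)"
proof -
  have "(M *\<^sub>v unit_vec n j) $ a = (\<Sum>i\<in>{0..<n}. M $$ (a,i) * unit_vec n j $ i)"
    using M a by (simp add: scalar_prod_def)
  also have "\<dots> = (\<Sum>i\<in>{0..<n}. if i = j then M $$ (a,i) else 0)"
    by (rule sum.cong, auto simp: unit_vec_def)
  also have "\<dots> = M $$ (a,j)" using j by simp
  finally show ?thesis .
qed

lemma spectral: fixes A :: "complex mat"
  assumes "A \<in> carrier_mat n n" "adj A = A"
  shows "\<exists>U lam. unitary n U \<and> A = U * diagm n lam * adj U"
  using assms
proof (induction n arbitrary: A)
  case 0
  have "A = 1\<^sub>m 0 * diagm 0 (\<lambda>_. 0) * adj (1\<^sub>m 0)" by (rule eq_matI) (use 0 in auto)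
  moreover have "unitary 0 (1\<^sub>m 0)" by (simp add: unitary_def)
  ultimately show ?case by blast
next
  case (Suc m)
  define n where "n = Suc m"
  have A: "A \<in> carrier_mat n n" and hA: "adj A = A" using Suc.prems n_def by auto
  obtain e v where v: "v \<in> carrier_vec n" "v \<noteq> 0\<^sub>v n" "A *\<^sub>v v = e \<cdot>\<^sub>v v"
    using exists_eigen[OF Suc.prems(1)] n_def by blast
  obtain u r where u: "u \<in> carrier_vec n" "A *\<^sub>v u = e \<cdot>\<^sub>v u" "(\<Sum>k<n. (cmod (u$k))^2) = 1" "u$0 = complex_of_real r"
    using unit_eigen[OF A v] by blast
  obtain H where H: "H \<in> carrier_mat n n" "adj H = H" "H * H = 1\<^sub>m n" "\<forall>a<n. H $$ (a,0) = u$a"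
    using householder[OF u(1) _ u(3) u(4)] n_def by blast
  have n0: "0 < n" by (simp add: n_def)
  have He0: "H *\<^sub>v unit_vec n 0 = u"
    by (rule eq_vecI, use H u n0 mult_unit_vec_index[OF H(1) _ n0] in auto)
  define A' where "A' = H * A * H"
  have A': "A' \<in> carrier_mat n n" unfolding A'_def using H A by auto
  have "A' *\<^sub>v unit_vec n 0 = H *\<^sub>v (A *\<^sub>v (H *\<^sub>v unit_vec n 0))"
  proof -
    have AH: "A * H \<in> carrier_mat n n" using A H by simp
    show ?thesis unfolding A'_def using H A AH
      by (simp add: assoc_mult_mat_vec[OF H(1) AH] assoc_mult_mat_vec[OF A H(1)])
  qed
  also have "\<dots> = e \<cdot>\<^sub>v (H *\<^sub>v u)" unfolding He0 u(2) using H u by (simp add: mult_mat_vec)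
  also have "H *\<^sub>v u = unit_vec n 0"
    unfolding He0[symmetric] using H by (simp flip: assoc_mult_mat_vec[OF H(1) H(1)])
  finally have A'e0: "A' *\<^sub>v unit_vec n 0 = e \<cdot>\<^sub>v unit_vec n 0" .
  have col0: "A' $$ (a,0) = (if a = 0 then e else 0)" if a: "a < n" for a
    using arg_cong[OF A'e0, of "\<lambda>x. x $ a"] mult_unit_vec_index[OF A' a n0] a by simp
  have "adj A' = adj H * adj (H * A)" unfolding A'_def by (rule adj_mult[of "H * A" n n H n]) (use H A in auto)
  also have "\<dots> = H * (A * H)"
  proof -
    have "adj (H * A) = A * H" using adj_mult[OF H(1) A] hA H(2) by simp
    then show ?thesis using H(2) by simp
  qed
  also have "\<dots> = A'" unfolding A'_def using H A by simp
  finally have hA': "adj A' = A'" .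
  have row0: "A' $$ (0,b) = (if b = 0 then cnj e else 0)" if b: "b < n" for b
  proof -
    have "A' $$ (0,b) = adj A' $$ (0,b)" using hA' by simp
    also have "\<dots> = cnj (A' $$ (b,0))" using A' b n0 by simp
    finally show ?thesis using col0[OF b] by simp
  qed
  have "e = cnj e" using col0[OF n0] row0[OF n0] by simp
  then have er: "e = complex_of_real (Re e)" "cnj e = complex_of_real (Re e)"
    by (metis Reals_cnj_iff complex_is_Real_iff of_real_Re)+
  define A3 where "A3 = mat m m (\<lambda>(a,b). A' $$ (Suc a, Suc b))"
  have A3: "A3 \<in> carrier_mat m m" unfolding A3_def by simp
  have hA3: "adj A3 = A3"
  proof (rule eq_matI)
    fix a b assume ab: "a < dim_row A3" "b < dim_col A3"
    then have ab': "a < m" "b < m" using A3 by auto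
    have "adj A3 $$ (a,b) = cnj (A' $$ (Suc b, Suc a))" using ab' A3 by (simp add: A3_def)
    also have "\<dots> = adj A' $$ (Suc a, Suc b)" using ab' A' n_def by simp
    also have "\<dots> = A3 $$ (a,b)" using ab' hA' by (simp add: A3_def)
    finally show "adj A3 $$ (a,b) = A3 $$ (a,b)" .
  qed (use A3 in auto)
  obtain U3 lam3 where U3: "unitary m U3" "A3 = U3 * diagm m lam3 * adj U3"
    using Suc.IH[OF A3 hA3] by blast
  have U3c: "U3 \<in> carrier_mat m m" using U3 unfolding unitary_def by auto
  define U' where "U' = ext1 m U3"
  define lam' where "lam' k = (if k = 0 then Re e else lam3 (k - 1))" for k
  have U': "unitary n U'" unfolding U'_def n_def by (rule ext1_unitary[OF U3(1)])
  have U'c: "U' \<in> carrier_mat n n" unfolding U'_def n_def by simp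
  have A'eq: "A' = U' * diagm n lam' * adj U'"
  proof (rule eq_matI)
    fix a b assume ab: "a < dim_row (U' * diagm n lam' * adj U')" "b < dim_col (U' * diagm n lam' * adj U')"
    then have ab': "a < Suc m" "b < Suc m" using U'c n_def by auto
    have R: "(U' * diagm n lam' * adj U') $$ (a,b) =
       U' $$ (a,0) * complex_of_real (lam' 0) * cnj (U' $$ (b,0)) +
       (\<Sum>k<m. U' $$ (a,Suc k) * complex_of_real (lam' (Suc k)) * cnj (U' $$ (b,Suc k)))"
      using ab' n_def by (subst UDU_entry[OF U'c], simp_all del: sum.lessThan_Suc add: sum.lessThan_Suc_shift)
    show "A' $$ (a,b) = (U' * diagm n lam' * adj U') $$ (a,b)"
    proof (cases a)
      case 0
      then show ?thesis unfolding R using ab' row0[of b] er n_def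
        by (simp add: U'_def ext1_0b ext1_a0 lam'_def)
    next
      case (Suc a')
      show ?thesis
      proof (cases b)
        case 0
        then show ?thesis unfolding R using ab' col0[of a] er n_def Suc
          by (simp add: U'_def ext1_0b ext1_a0 lam'_def)
      next
        case (Suc b')
        have "A' $$ (a,b) = A3 $$ (a',b')" using ab' Suc \<open>a = Suc a'\<close> by (simp add: A3_def)
        also have "\<dots> = (\<Sum>k<m. U3 $$ (a',k) * complex_of_real (lam3 k) * cnj (U3 $$ (b',k)))"
          using ab' Suc \<open>a = Suc a'\<close> by (subst U3(2), subst UDU_entry[OF U3c]) auto
        finally show ?thesis unfolding R using ab' Suc \<open>a = Suc a'\<close>
          by (simp add: U'_def lam'_def)
      qed
    qed
  qed (use A' U'c in auto)
  have HU: "unitary n H" using H unfolding unitary_def by auto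
  define U where "U = H * U'"
  have U: "unitary n U" unfolding U_def by (rule unitary_mult[OF HU U'])
  have D: "diagm n lam' \<in> carrier_mat n n" by simp
  have adjU: "adj U = adj U' * H" unfolding U_def using adj_mult[OF H(1) U'c] H by simp
  have "U * diagm n lam' * adj U = H * (U' * diagm n lam' * adj U') * H"
  proof -
    have c1: "adj U' * H \<in> carrier_mat n n" "diagm n lam' * (adj U' * H) \<in> carrier_mat n n"
      "U' * (diagm n lam' * (adj U' * H)) \<in> carrier_mat n n" "U' * diagm n lam' \<in> carrier_mat n n"
      "diagm n lam' * adj U' \<in> carrier_mat n n" "U' * (diagm n lam' * adj U') \<in> carrier_mat n n"
      "H * U' \<in> carrier_mat n n" "H * U' * diagm n lam' \<in> carrier_mat n n"
      using H U'c D by (auto intro!: mult_carrier_mat)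
    show ?thesis unfolding adjU unfolding U_def using H U'c D c1
      by (simp add: assoc_mult_mat[of _ n n _ n _ n])
  qed
  also have "\<dots> = H * (H * A * H) * H" unfolding A'eq[symmetric] A'_def ..
  also have "\<dots> = A"
  proof -
    have HHX: "H * (H * X) = X" if "X \<in> carrier_mat n n" for X
      using that H by (metis assoc_mult_mat left_mult_one_mat)
    have c: "A * H \<in> carrier_mat n n" "H * (A * H) \<in> carrier_mat n n" "H * A \<in> carrier_mat n n"
      using H A by auto
    show ?thesis using H A c by (simp add: HHX assoc_mult_mat[of _ n n _ n _ n])
  qed
  finally show ?case using U n_def by metis
qed


definition qf :: "nat \<Rightarrow> complex mat \<Rightarrow> complex vec \<Rightarrow> complex" where
  "qf d M x = (\<Sum>a<d. \<Sum>b<d. M $$ (a,b) * x$b * cnj (x$a))"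

lemma qf_eq: assumes "M \<in> carrier_mat d d" "x \<in> carrier_vec d"
  shows "(M *\<^sub>v x) \<bullet>c x = qf d M x"
  using assms by (simp add: qf_def scalar_prod_def atLeast0LessThan sum_distrib_right)

lemma qf_msum: assumes "\<And>i. i < n \<Longrightarrow> f i \<in> carrier_mat d d"
  shows "qf d (msum d n f) x = (\<Sum>i<n. qf d (f i) x)"
proof -
  have "qf d (msum d n f) x = (\<Sum>a<d. \<Sum>b<d. \<Sum>i<n. f i $$ (a,b) * x$b * cnj (x$a))"
    unfolding qf_def by (rule sum.cong, simp, rule sum.cong, simp,
        simp add: msum_index[OF assms] sum_distrib_right)
  also have "\<dots> = (\<Sum>i<n. qf d (f i) x)"
    unfolding qf_def by (subst sum.swap, subst (2) sum.swap, simp)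
  finally show ?thesis .
qed

definition zz :: "nat \<Rightarrow> complex mat \<Rightarrow> complex vec \<Rightarrow> nat \<Rightarrow> complex" where
  "zz d K x j = (\<Sum>a<d. K $$ (a,j) * cnj (x$a))"

lemma qf_KDK: assumes K: "K \<in> carrier_mat d d"
  shows "qf d (K * diagm d q * adj K) x = complex_of_real (\<Sum>j<d. q j * (cmod (zz d K x j))^2)"
proof -
  have "qf d (K * diagm d q * adj K) x =
      (\<Sum>a<d. \<Sum>b<d. \<Sum>j<d. K $$ (a,j) * complex_of_real (q j) * cnj (K $$ (b,j)) * x$b * cnj (x$a))"
    unfolding qf_def by (rule sum.cong, simp, rule sum.cong, simp,
        simp add: UDU_entry[OF K] sum_distrib_right)
  also have "\<dots> = (\<Sum>j<d. \<Sum>a<d. \<Sum>b<d. complex_of_real (q j) * (K $$ (a,j) * cnj (x$a)) * (cnj (K $$ (b,j)) * x$b))"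
    by (subst sum.swap, subst (2) sum.swap, rule sum.cong, simp, simp add: ac_simps)
  also have "\<dots> = (\<Sum>j<d. complex_of_real (q j) * (zz d K x j * cnj (zz d K x j)))"
    unfolding zz_def by (simp add: sum_distrib_left sum_distrib_right ac_simps)
  also have "\<dots> = complex_of_real (\<Sum>j<d. q j * (cmod (zz d K x j))^2)"
    unfolding of_real_sum by (rule sum.cong, simp, metis complex_norm_square of_real_mult)
  finally show ?thesis .
qed

lemma diagm_one: "diagm d (\<lambda>_. 1) = 1\<^sub>m d"
  by (rule eq_matI) (auto simp: diagm_def)

lemma qf_one: "qf d (1\<^sub>m d) x = complex_of_real (\<Sum>a<d. (cmod (x$a))^2)"
proof -
  have "qf d (1\<^sub>m d) x = (\<Sum>a<d. \<Sum>b<d. if b = a then x$a * cnj (x$a) else 0)"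
    unfolding qf_def by (rule sum.cong, simp, rule sum.cong, auto)
  also have "\<dots> = (\<Sum>a<d. x$a * cnj (x$a))" by simp
  also have "\<dots> = complex_of_real (\<Sum>a<d. (cmod (x$a))^2)"
    unfolding of_real_sum by (rule sum.cong, simp, metis complex_norm_square)
  finally show ?thesis .
qed

lemma zz_col: assumes U: "unitary d U" and l: "l < d" and j: "j < d"
  shows "zz d U (col U l) j = (if j = l then 1 else 0)"
proof -
  have Uc: "U \<in> carrier_mat d d" and UU: "adj U * U = 1\<^sub>m d" using U unfolding unitary_def by auto
  have "zz d U (col U l) j = (\<Sum>k<d. cnj (U $$ (k,l)) * U $$ (k,j))"
    unfolding zz_def by (rule sum.cong, use Uc l in auto)
  also have "\<dots> = (adj U * U) $$ (l,j)" by (rule adjU_U_entry[OF Uc l j, symmetric])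
  also have "\<dots> = (if j = l then 1 else 0)" using UU l j by auto
  finally show ?thesis .
qed

lemma qf_col: assumes U: "unitary d U" and l: "l < d"
  shows "qf d (U * diagm d lam * adj U) (col U l) = complex_of_real (lam l)"
proof -
  have Uc: "U \<in> carrier_mat d d" using U unfolding unitary_def by auto
  have "(\<Sum>j<d. lam j * (cmod (zz d U (col U l) j))^2) = (\<Sum>j<d. if j = l then lam j else 0)"
    by (rule sum.cong, auto simp: zz_col[OF U l])
  also have "\<dots> = lam l" using l by simp
  finally show ?thesis by (simp add: qf_KDK[OF Uc])
qed

lemma col_norm: assumes U: "unitary d U" and l: "l < d"
  shows "(\<Sum>a<d. (cmod (col U l $ a))^2) = 1"
proof -
  have Uc: "U \<in> carrier_mat d d" and UU: "adj U * U = 1\<^sub>m d" using U unfolding unitary_def by auto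
  have "complex_of_real (\<Sum>a<d. (cmod (col U l $ a))^2) = (\<Sum>a<d. cnj (U $$ (a,l)) * U $$ (a,l))"
    unfolding of_real_sum
  proof (rule sum.cong)
    fix a assume "a \<in> {..<d}"
    then have "col U l $ a = U $$ (a,l)" using Uc l by auto
    then show "complex_of_real ((cmod (col U l $ a))^2) = cnj (U $$ (a,l)) * U $$ (a,l)"
      by (metis complex_norm_square mult.commute)
  qed simp
  also have "\<dots> = (adj U * U) $$ (l,l)" by (rule adjU_U_entry[OF Uc l l, symmetric])
  also have "\<dots> = 1" using UU l by auto
  finally show ?thesis by (metis of_real_eq_1_iff)
qed


lemma diagm_vec_index: assumes w: "w \<in> carrier_vec d" and a: "a < d"
  shows "(diagm d lam *\<^sub>v w) $ a = complex_of_real (lam a) * w $ a"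
proof -
  have "(diagm d lam *\<^sub>v w) $ a = (\<Sum>i\<in>{0..<d}. diagm d lam $$ (a,i) * w $ i)"
    using w a by (simp add: scalar_prod_def)
  also have "\<dots> = (\<Sum>i\<in>{0..<d}. if i = a then complex_of_real (lam a) * w $ a else 0)"
    by (rule sum.cong, auto simp: diagm_def a)
  also have "\<dots> = complex_of_real (lam a) * w $ a" using a by simp
  finally show ?thesis .
qed

lemma eig_set: assumes U: "unitary d U" and rho: "\<rho> = U * diagm d lam * adj U"
  shows "{Re l | l. eigenvalue \<rho> l} = lam ` {..<d}"
proof -
  have Uc: "U \<in> carrier_mat d d" and UU: "adj U * U = 1\<^sub>m d" and UU': "U * adj U = 1\<^sub>m d"
    using U unfolding unitary_def by auto
  have D: "diagm d lam \<in> carrier_mat d d" by simp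
  have rc: "\<rho> \<in> carrier_mat d d" unfolding rho using Uc by (rule UDU_carrier)
  have rU: "\<rho> * U = U * diagm d lam"
  proof -
    have "\<rho> * U = U * diagm d lam * (adj U * U)" unfolding rho using Uc D
      by (simp add: assoc_mult_mat[of _ d d _ d _ d])
    then show ?thesis using UU Uc by simp
  qed
  have Ur: "adj U * \<rho> = diagm d lam * adj U"
  proof -
    have "adj U * \<rho> = (adj U * U) * (diagm d lam * adj U)" unfolding rho using Uc D
      by (simp add: assoc_mult_mat[of _ d d _ d _ d])
    then show ?thesis using UU Uc by simp
  qed
  show ?thesis
  proof (intro equalityI subsetI)
    fix y assume "y \<in> {Re l | l. eigenvalue \<rho> l}"
    then obtain mu v where y: "y = Re mu" and ev: "eigenvector \<rho> v mu"
      unfolding eigenvalue_def by blast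
    have v: "v \<in> carrier_vec d" "v \<noteq> 0\<^sub>v d" "\<rho> *\<^sub>v v = mu \<cdot>\<^sub>v v"
      using ev rc unfolding eigenvector_def by auto
    define w where "w = adj U *\<^sub>v v"
    have wc: "w \<in> carrier_vec d" unfolding w_def by (rule mult_mat_vec_carrier[OF adj_carrier[OF Uc] v(1)])
    have "diagm d lam *\<^sub>v w = (diagm d lam * adj U) *\<^sub>v v"
      unfolding w_def by (rule assoc_mult_mat_vec[symmetric, of _ d d _ d]) (use Uc v in auto)
    also have "\<dots> = (adj U * \<rho>) *\<^sub>v v" unfolding Ur ..
    also have "\<dots> = adj U *\<^sub>v (\<rho> *\<^sub>v v)"
      by (rule assoc_mult_mat_vec[of _ d d _ d]) (use Uc rc v in auto)
    also have "\<dots> = mu \<cdot>\<^sub>v w" unfolding v(3) w_def by (rule mult_mat_vec[OF adj_carrier[OF Uc] v(1)])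
    finally have Dw: "diagm d lam *\<^sub>v w = mu \<cdot>\<^sub>v w" .
    have "U *\<^sub>v w = v" unfolding w_def using Uc v UU'
      by (simp flip: assoc_mult_mat_vec[of U d d "adj U" d v])
    then have "w \<noteq> 0\<^sub>v d" using v Uc by auto
    then obtain l where l: "l < d" "w $ l \<noteq> 0" using wc by (metis eq_vecI index_zero_vec carrier_vecD)
    have "complex_of_real (lam l) * w $ l = mu * w $ l"
      using arg_cong[OF Dw, of "\<lambda>x. x $ l"] diagm_vec_index[OF wc l(1)] l wc by simp
    then have "mu = complex_of_real (lam l)" using l by simp
    then show "y \<in> lam ` {..<d}" using y l by auto
  next
    fix y assume "y \<in> lam ` {..<d}"
    then obtain l where l: "l < d" "y = lam l" by auto
    define v where "v = U *\<^sub>v unit_vec d l"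
    have vc: "v \<in> carrier_vec d" unfolding v_def using Uc by simp
    have De: "diagm d lam *\<^sub>v unit_vec d l = complex_of_real (lam l) \<cdot>\<^sub>v unit_vec d l"
      by (rule eq_vecI, auto simp: diagm_def l)
    have "\<rho> *\<^sub>v v = (\<rho> * U) *\<^sub>v unit_vec d l" unfolding v_def
      by (rule assoc_mult_mat_vec[symmetric, of _ d d _ d]) (use Uc rc in auto)
    also have "\<dots> = U *\<^sub>v (diagm d lam *\<^sub>v unit_vec d l)" unfolding rU
      by (rule assoc_mult_mat_vec[of _ d d _ d]) (use Uc in auto)
    also have "\<dots> = complex_of_real (lam l) \<cdot>\<^sub>v v" unfolding De v_def by (rule mult_mat_vec[OF Uc unit_vec_carrier])
    finally have rv: "\<rho> *\<^sub>v v = complex_of_real (lam l) \<cdot>\<^sub>v v" .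
    have av: "adj U *\<^sub>v v = unit_vec d l" unfolding v_def using Uc UU
      by (simp flip: assoc_mult_mat_vec[of "adj U" d d U d "unit_vec d l"])
    have a0: "(adj U *\<^sub>v 0\<^sub>v d) $ l = 0" using Uc l by (simp add: scalar_prod_def)
    have "v \<noteq> 0\<^sub>v d"
    proof
      assume "v = 0\<^sub>v d"
      then have "unit_vec d l $ l = (0::complex)" using av a0 by simp
      then show False using l by simp
    qed
    then have "eigenvalue \<rho> (complex_of_real (lam l))"
      unfolding eigenvalue_def eigenvector_def using vc rv rc by auto
    then show "y \<in> {Re l | l. eigenvalue \<rho> l}" using l by force
  qed
qed


lemma density_spec: assumes rho: "density d \<rho>"
  obtains U lam where "unitary d U" "\<rho> = U * diagm d lam * adj U" "\<forall>l<d. 0 \<le> lam l"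
    "(\<Sum>l<d. lam l) = 1" "lambda_max \<rho> = Max (lam ` {..<d})"
proof -
  have rc: "\<rho> \<in> carrier_mat d d" and h: "adj \<rho> = \<rho>"
    and pos: "\<forall>v \<in> carrier_vec d. 0 \<le> Re ((\<rho> *\<^sub>v v) \<bullet>c v)" and tr: "mtrace \<rho> = 1"
    using rho unfolding density_def psd_def by auto
  obtain U lam where U: "unitary d U" and r: "\<rho> = U * diagm d lam * adj U"
    using spectral[OF rc h] by blast
  have Uc: "U \<in> carrier_mat d d" and UU: "adj U * U = 1\<^sub>m d" using U unfolding unitary_def by auto
  have nonneg: "\<forall>l<d. 0 \<le> lam l"
  proof (intro allI impI)
    fix l assume l: "l < d"
    have cc: "col U l \<in> carrier_vec d" using Uc unfolding col_def by auto
    have "(\<rho> *\<^sub>v col U l) \<bullet>c col U l = complex_of_real (lam l)"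
      unfolding qf_eq[OF rc cc] unfolding r by (rule qf_col[OF U l])
    then show "0 \<le> lam l" using pos cc by force
  qed
  have "mtrace \<rho> = (\<Sum>a<d. \<Sum>k<d. U $$ (a,k) * complex_of_real (lam k) * cnj (U $$ (a,k)))"
  proof -
    have dr: "dim_row \<rho> = d" using rc by auto
    show ?thesis unfolding mtrace_def dr
      by (rule sum.cong, simp, subst r, subst UDU_entry[OF Uc], auto)
  qed
  also have "\<dots> = (\<Sum>k<d. complex_of_real (lam k) * (\<Sum>a<d. cnj (U $$ (a,k)) * U $$ (a,k)))"
    by (subst sum.swap, rule sum.cong, simp, simp add: sum_distrib_left ac_simps)
  also have "\<dots> = (\<Sum>k<d. complex_of_real (lam k))"
  proof (rule sum.cong)
    fix k assume k: "k \<in> {..<d}"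
    have "(\<Sum>a<d. cnj (U $$ (a,k)) * U $$ (a,k)) = (adj U * U) $$ (k,k)"
      using k by (subst adjU_U_entry[OF Uc]) auto
    then show "complex_of_real (lam k) * (\<Sum>a<d. cnj (U $$ (a,k)) * U $$ (a,k)) = complex_of_real (lam k)"
      using UU k by simp
  qed simp
  finally have "complex_of_real (\<Sum>k<d. lam k) = 1" using tr by simp
  then have sum1: "(\<Sum>l<d. lam l) = 1" by (metis of_real_eq_1_iff)
  have "lambda_max \<rho> = Max (lam ` {..<d})"
    unfolding lambda_max_def eig_set[OF U r] ..
  then show ?thesis using that U r nonneg sum1 by blast
qed

lemma max_facts: assumes d: "0 < d" and nonneg: "\<forall>l<d. 0 \<le> lam l" and sum1: "(\<Sum>l<d. lam l) = 1"
  shows "\<forall>l<d. lam l \<le> Max (lam ` {..<d})" "1 / real d \<le> Max (lam ` {..<d})"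
    "Max (lam ` {..<d}) \<le> 1" "0 < Max (lam ` {..<d})"
proof -
  let ?M = "Max (lam ` {..<d})"
  have ne: "lam ` {..<d} \<noteq> {}" using d by auto
  show le: "\<forall>l<d. lam l \<le> ?M" by auto
  have "1 \<le> (\<Sum>l<d. ?M)" unfolding sum1[symmetric] by (rule sum_mono, use le in auto)
  then have "1 \<le> real d * ?M" by simp
  then show ge: "1 / real d \<le> ?M" using d by (simp add: field_simps)
  have "?M \<in> lam ` {..<d}" by (rule Max_in) (use ne in auto)
  then obtain l where l: "l < d" "?M = lam l" by auto
  have "lam l \<le> (\<Sum>l<d. lam l)" by (rule member_le_sum, use l nonneg in auto)
  then show "?M \<le> 1" using l sum1 by simp
  show "0 < ?M" using ge d by (smt (verit) divide_pos_pos of_nat_0_less_iff)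
qed


lemma Pi_diagm: "(1 / complex_of_nat k) \<cdot>\<^sub>m Pi_proj d k = diagm d (\<lambda>j. if j < k then 1 / real k else 0)"
  by (rule eq_matI) (auto simp: Pi_proj_def diagm_def)

lemma chan_bound:
  assumes E: "unital_cptp d E" and x: "x \<in> carrier_vec d"
  shows "Re (qf d (E ((1 / complex_of_nat k) \<cdot>\<^sub>m Pi_proj d k)) x) \<le> (1 / real k) * (\<Sum>a<d. (cmod (x$a))^2)"
proof -
  obtain n K where K: "\<forall>i<n. K i \<in> carrier_mat d d"
    and KK: "msum d n (\<lambda>i. K i * adj (K i)) = 1\<^sub>m d"
    and EK: "\<forall>\<rho> \<in> carrier_mat d d. E \<rho> = msum d n (\<lambda>i. K i * \<rho> * adj (K i))"
    using E unfolding unital_cptp_def by blast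
  define q where "q j = (if j < k then 1 / real k else 0)" for j
  have P: "(1 / complex_of_nat k) \<cdot>\<^sub>m Pi_proj d k = diagm d q" unfolding q_def by (rule Pi_diagm)
  define z where "z i j = zz d (K i) x j" for i j
  have "qf d (E (diagm d q)) x = (\<Sum>i<n. qf d (K i * diagm d q * adj (K i)) x)"
    using EK K by (simp add: qf_msum)
  also have "\<dots> = complex_of_real (\<Sum>i<n. \<Sum>j<d. q j * (cmod (z i j))^2)"
    unfolding z_def by (subst of_real_sum, rule sum.cong, simp, rule qf_KDK, use K in auto)
  finally have 1: "Re (qf d (E (diagm d q)) x) = (\<Sum>i<n. \<Sum>j<d. q j * (cmod (z i j))^2)" by simp
  have "complex_of_real (\<Sum>a<d. (cmod (x$a))^2) = qf d (msum d n (\<lambda>i. K i * adj (K i))) x"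
    unfolding KK qf_one ..
  also have "\<dots> = (\<Sum>i<n. qf d (K i * diagm d (\<lambda>_. 1) * adj (K i)) x)"
    using K by (subst qf_msum) (auto simp: diagm_one intro!: sum.cong)
  also have "\<dots> = complex_of_real (\<Sum>i<n. \<Sum>j<d. 1 * (cmod (z i j))^2)"
    unfolding z_def by (subst of_real_sum, rule sum.cong, simp, rule qf_KDK, use K in auto)
  finally have 2: "(\<Sum>a<d. (cmod (x$a))^2) = (\<Sum>i<n. \<Sum>j<d. (cmod (z i j))^2)"
    by (simp only: of_real_eq_iff mult_1)
  have "(\<Sum>i<n. \<Sum>j<d. q j * (cmod (z i j))^2) \<le> (\<Sum>i<n. \<Sum>j<d. (1 / real k) * (cmod (z i j))^2)"
    by (intro sum_mono mult_right_mono) (auto simp: q_def)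
  also have "\<dots> = (1 / real k) * (\<Sum>a<d. (cmod (x$a))^2)"
    unfolding 2 by (simp add: sum_distrib_left)
  finally show ?thesis unfolding P 1 .
qed


lemma sum_divmod: "(\<Sum>t<(d::nat)*d. f (t div d) (t mod d)) = (\<Sum>i<d. \<Sum>l<d. (f i l :: 'a :: comm_monoid_add))"
proof (cases "d = 0")
  case True then show ?thesis by simp
next
  case False
  then have d: "0 < d" by simp
  have "(\<Sum>i<d. \<Sum>l<d. f i l) = (\<Sum>(i,l)\<in>{..<d}\<times>{..<d}. f i l)" by (simp add: sum.cartesian_product)
  also have "\<dots> = (\<Sum>t<d*d. f (t div d) (t mod d))"
  proof (rule sum.reindex_bij_witness[of _ "\<lambda>t. (t div d, t mod d)" "\<lambda>(i,l). i*d + l"])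
    fix t assume "t \<in> {..<d*d}"
    then show "(\<lambda>(i,l). i*d + l) (t div d, t mod d) = t" by simp
    show "(t div d, t mod d) \<in> {..<d}\<times>{..<d}" using \<open>t \<in> {..<d*d}\<close> d
      by (auto simp: less_mult_imp_div_less)
  next
    fix p assume p: "p \<in> {..<d}\<times>{..<d}"
    obtain i l where il: "p = (i,l)" "i < d" "l < d" using p by auto
    have "i * d + l < d * d"
    proof -
      have "i * d + l < i * d + d" using il by simp
      also have "\<dots> = (i + 1) * d" by simp
      also have "\<dots> \<le> d * d" using il by (intro mult_right_mono) auto
      finally show ?thesis .
    qed
    then show "(\<lambda>(i,l). i*d + l) p \<in> {..<d*d}" using il by simp
    show "((\<lambda>(i,l). i*d + l) p div d, (\<lambda>(i,l). i*d + l) p mod d) = p" using il by simp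
    show "f (((\<lambda>(i,l). i*d + l) p) div d) (((\<lambda>(i,l). i*d + l) p) mod d) = (case p of (i,l) \<Rightarrow> f i l)"
      using il by simp
  qed
  finally show ?thesis by simp
qed

definition kraus :: "nat \<Rightarrow> (nat \<Rightarrow> nat \<Rightarrow> real) \<Rightarrow> complex mat \<Rightarrow> nat \<Rightarrow> complex mat" where
  "kraus d w U t = mat d d (\<lambda>(a,b). complex_of_real (sqrt (w (t div d) (t mod d))) * U $$ (a, t mod d) *
      (if b = t div d then 1 else 0))"

lemma kraus_carrier[simp]: "kraus d w U t \<in> carrier_mat d d"
  by (simp add: kraus_def)

lemma kraus_KQK:
  assumes U: "U \<in> carrier_mat d d" and t: "t < d*d" and a: "a < d" and b: "b < d"
    and w: "0 \<le> w (t div d) (t mod d)"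
  shows "(kraus d w U t * diagm d q * adj (kraus d w U t)) $$ (a,b) =
     complex_of_real (w (t div d) (t mod d) * q (t div d)) * U $$ (a, t mod d) * cnj (U $$ (b, t mod d))"
proof -
  define i where "i = t div d"
  define l where "l = t mod d"
  define s where "s = sqrt (w i l)"
  have i: "i < d" unfolding i_def using t by (auto simp: less_mult_imp_div_less)
  have d: "0 < d" using a by simp
  have l: "l < d" unfolding l_def using d by simp
  have ss: "s * s = w i l" unfolding s_def using w i_def l_def by simp
  have "(kraus d w U t * diagm d q * adj (kraus d w U t)) $$ (a,b) =
     (\<Sum>c<d. if c = i then complex_of_real (s * s * q i) * U $$ (a,l) * cnj (U $$ (b,l)) else 0)"
    by (subst UDU_entry[OF kraus_carrier a b], rule sum.cong,
        auto simp: kraus_def a b i_def[symmetric] l_def[symmetric] s_def[symmetric])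
  also have "\<dots> = complex_of_real (s * s * q i) * U $$ (a,l) * cnj (U $$ (b,l))" using i by simp
  finally show ?thesis unfolding ss i_def l_def .
qed

lemma kraus_KK:
  assumes U: "unitary d U" and t: "t < d*d" and a: "a < d" and b: "b < d"
    and w: "0 \<le> w (t div d) (t mod d)"
  shows "(adj (kraus d w U t) * kraus d w U t) $$ (a,b) =
     (if a = t div d \<and> b = t div d then complex_of_real (w (t div d) (t mod d)) else 0)"
proof -
  define i where "i = t div d"
  define l where "l = t mod d"
  define s where "s = sqrt (w i l)"
  have Uc: "U \<in> carrier_mat d d" and UU: "adj U * U = 1\<^sub>m d" using U unfolding unitary_def by auto
  have d: "0 < d" using a by simp
  have l: "l < d" unfolding l_def using d by simp
  have ss: "s * s = w i l" unfolding s_def using w i_def l_def by simp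
  have cn: "(\<Sum>c<d. cnj (U $$ (c,l)) * U $$ (c,l)) = 1"
    using adjU_U_entry[OF Uc l l] UU l by simp
  have "(adj (kraus d w U t) * kraus d w U t) $$ (a,b) =
     (\<Sum>c<d. (if a = i \<and> b = i then complex_of_real (s * s) else 0) * (cnj (U $$ (c,l)) * U $$ (c,l)))"
    by (subst adjU_U_entry[OF kraus_carrier a b], rule sum.cong,
        auto simp: kraus_def a b i_def[symmetric] l_def[symmetric] s_def[symmetric])
  also have "\<dots> = (if a = i \<and> b = i then complex_of_real (s * s) else 0)"
    by (simp add: sum_distrib_left[symmetric] cn)
  finally show ?thesis unfolding ss i_def l_def .
qed


lemma sum_split_k: assumes "k \<le> (d::nat)"
  shows "(\<Sum>i<d. if i < k then f i else g i) = (\<Sum>i<k. f i) + (\<Sum>i\<in>{k..<d}. (g i :: real))"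
proof -
  have "{..<d} \<inter> {x. x < k} = {..<k}" "{..<d} \<inter> - {x. x < k} = {k..<d}" using assms by auto
  then show ?thesis by (simp add: sum.If_cases)
qed

lemma chan_construct:
  assumes k1: "1 \<le> k" and kd: "k \<le> d" and U: "unitary d U" and nonneg: "\<forall>l<d. 0 \<le> lam l"
    and sum1: "(\<Sum>l<d. lam l) = 1" and le: "\<forall>l<d. lam l \<le> 1 / real k"
  shows "\<exists>E. unital_cptp d E \<and> E ((1 / complex_of_nat k) \<cdot>\<^sub>m Pi_proj d k) = U * diagm d lam * adj U"
proof -
  have Uc: "U \<in> carrier_mat d d" and UU: "U * adj U = 1\<^sub>m d" using U unfolding unitary_def by auto
  define w where "w i l = (if i < k then lam l else (1 - real k * lam l) / (real d - real k))" for i l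
  have wpos: "0 \<le> w i l" if "i < d" "l < d" for i l
  proof (cases "i < k")
    case True then show ?thesis using nonneg that by (simp add: w_def)
  next
    case False
    then have "real k < real d" using that by simp
    moreover have "real k * lam l \<le> 1" using le that k1
      by (simp add: field_simps)
    ultimately show ?thesis using False by (simp add: w_def)
  qed
  have row: "(\<Sum>l<d. w i l) = 1" if i: "i < d" for i
  proof (cases "i < k")
    case True then show ?thesis using sum1 by (simp add: w_def)
  next
    case False
    then have kd': "real k < real d" using i by simp
    have "(\<Sum>l<d. w i l) = (\<Sum>l<d. 1 - real k * lam l) / (real d - real k)"
      using False by (simp add: w_def sum_divide_distrib)
    also have "(\<Sum>l<d. 1 - real k * lam l) = real d - real k"
      by (simp add: sum_subtractf sum_distrib_left[symmetric] sum1)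
    finally show ?thesis using kd' by simp
  qed
  have col: "(\<Sum>i<d. w i l) = 1" if l: "l < d" for l
  proof (cases "k = d")
    case True
    have "(\<Sum>l<d. 1 / real d - lam l) = 0" using sum1 True k1 by (simp add: sum_subtractf)
    moreover have "\<forall>l\<in>{..<d}. 0 \<le> 1 / real d - lam l" using le True by auto
    ultimately have "\<forall>l\<in>{..<d}. 1 / real d - lam l = 0" by (subst (asm) sum_nonneg_eq_0_iff) auto
    then have "lam l = 1 / real d" using l by auto
    then show ?thesis using True k1 by (simp add: w_def)
  next
    case False
    then have kd': "real k < real d" using kd by simp
    have "(\<Sum>i<d. w i l) = (\<Sum>i<k. lam l) + (\<Sum>i\<in>{k..<d}. (1 - real k * lam l) / (real d - real k))"
      unfolding w_def by (rule sum_split_k[OF kd])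
    also have "\<dots> = 1" using kd' kd by (simp add: of_nat_diff)
    finally show ?thesis .
  qed
  define K where "K = kraus d w U"
  define E where "E \<rho> = msum d (d*d) (\<lambda>t. K t * \<rho> * adj (K t))" for \<rho>
  have Kc: "K t \<in> carrier_mat d d" for t unfolding K_def by simp
  have wt: "0 \<le> w (t div d) (t mod d)" if "t < d*d" for t
  proof -
    have "0 < d" using that by (cases d) auto
    then show ?thesis using that by (intro wpos) (auto simp: less_mult_imp_div_less)
  qed
  have C1: "msum d (d*d) (\<lambda>t. adj (K t) * K t) = 1\<^sub>m d"
  proof (rule eq_matI)
    fix a b assume "a < dim_row (1\<^sub>m d)" "b < dim_col (1\<^sub>m d)"
    then have ab: "a < d" "b < d" by auto
    have "msum d (d*d) (\<lambda>t. adj (K t) * K t) $$ (a,b) =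
       (\<Sum>t<d*d. if a = t div d \<and> b = t div d then complex_of_real (w (t div d) (t mod d)) else 0)"
    proof -
      have e: "(adj (K t) * K t) $$ (a,b) = (if a = t div d \<and> b = t div d then complex_of_real (w (t div d) (t mod d)) else 0)"
        if t: "t < d*d" for t unfolding K_def by (rule kraus_KK[where w=w, OF U t ab wt[OF t]])
      show ?thesis using Kc ab by (subst msum_index) (auto intro!: sum.cong simp: e)
    qed
    also have "\<dots> = (\<Sum>i<d. \<Sum>l<d. if a = i \<and> b = i then complex_of_real (w i l) else 0)"
      by (rule sum_divmod)
    also have "\<dots> = (\<Sum>i<d. if a = i \<and> b = i then (\<Sum>l<d. complex_of_real (w i l)) else 0)"
      by (rule sum.cong) auto
    also have "\<dots> = (if a = b then complex_of_real (\<Sum>l<d. w a l) else 0)"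
    proof (cases "a = b")
      case False
      have "(\<Sum>i<d. if a = i \<and> b = i then \<Sum>l<d. complex_of_real (w i l) else 0) = 0"
        by (rule sum.neutral) (use False in auto)
      then show ?thesis using False by simp
    qed (use ab in \<open>auto simp: of_real_sum\<close>)
    also have "\<dots> = 1\<^sub>m d $$ (a,b)" using ab row by simp
    finally show "msum d (d*d) (\<lambda>t. adj (K t) * K t) $$ (a,b) = 1\<^sub>m d $$ (a,b)" .
  qed (use Kc in \<open>auto intro!: msum_carrier[THEN carrier_matD(1)] msum_carrier[THEN carrier_matD(2)]\<close>)
  have gen: "msum d (d*d) (\<lambda>t. K t * diagm d q * adj (K t)) $$ (a,b) =
      (\<Sum>l<d. complex_of_real (\<Sum>i<d. w i l * q i) * U $$ (a,l) * cnj (U $$ (b,l)))"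
    if ab: "a < d" "b < d" for a b q
  proof -
    have "msum d (d*d) (\<lambda>t. K t * diagm d q * adj (K t)) $$ (a,b) =
       (\<Sum>t<d*d. complex_of_real (w (t div d) (t mod d) * q (t div d)) * U $$ (a, t mod d) * cnj (U $$ (b, t mod d)))"
    proof -
      have e: "(K t * diagm d q * adj (K t)) $$ (a,b) = complex_of_real (w (t div d) (t mod d) * q (t div d)) * U $$ (a, t mod d) * cnj (U $$ (b, t mod d))"
        if t: "t < d*d" for t unfolding K_def by (rule kraus_KQK[where w=w, OF Uc t ab wt[OF t]])
      show ?thesis using Kc ab by (subst msum_index) (auto intro!: sum.cong simp: e)
    qed
    also have "\<dots> = (\<Sum>i<d. \<Sum>l<d. complex_of_real (w i l * q i) * U $$ (a,l) * cnj (U $$ (b,l)))"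
      by (rule sum_divmod)
    also have "\<dots> = (\<Sum>l<d. complex_of_real (\<Sum>i<d. w i l * q i) * U $$ (a,l) * cnj (U $$ (b,l)))"
      by (subst sum.swap) (simp add: of_real_sum sum_distrib_right)
    finally show ?thesis .
  qed
  have C2: "msum d (d*d) (\<lambda>t. K t * adj (K t)) = 1\<^sub>m d"
  proof (rule eq_matI)
    fix a b assume "a < dim_row (1\<^sub>m d)" "b < dim_col (1\<^sub>m d)"
    then have ab: "a < d" "b < d" by auto
    have "msum d (d*d) (\<lambda>t. K t * adj (K t)) = msum d (d*d) (\<lambda>t. K t * diagm d (\<lambda>_. 1) * adj (K t))"
      unfolding diagm_one by (rule arg_cong[of _ _ "msum d (d*d)"]) (rule ext, metis Kc right_mult_one_mat)
    also have "\<dots> $$ (a,b) = (\<Sum>l<d. U $$ (a,l) * cnj (U $$ (b,l)))"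
      unfolding gen[OF ab] using col by (auto intro!: sum.cong)
    also have "\<dots> = 1\<^sub>m d $$ (a,b)" using U_adjU_entry[OF Uc ab] UU by simp
    finally show "msum d (d*d) (\<lambda>t. K t * adj (K t)) $$ (a,b) = 1\<^sub>m d $$ (a,b)" .
  qed (use Kc in \<open>auto intro!: msum_carrier[THEN carrier_matD(1)] msum_carrier[THEN carrier_matD(2)]\<close>)
  have ucp: "unital_cptp d E"
    unfolding unital_cptp_def
    by (rule exI[of _ "d*d"], rule exI[of _ K], use Kc C1 C2 in \<open>auto simp: E_def\<close>)
  define q where "q j = (if j < k then 1 / real k else 0)" for j
  have "E ((1 / complex_of_nat k) \<cdot>\<^sub>m Pi_proj d k) = U * diagm d lam * adj U"
  proof (rule eq_matI)
    fix a b assume "a < dim_row (U * diagm d lam * adj U)" "b < dim_col (U * diagm d lam * adj U)"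
    then have ab: "a < d" "b < d" using Uc by auto
    have wq: "(\<Sum>i<d. w i l * q i) = lam l" for l
    proof -
      have "(\<Sum>i<d. w i l * q i) = (\<Sum>i<d. if i < k then lam l / real k else 0)"
        by (rule sum.cong, auto simp: w_def q_def)
      also have "\<dots> = (\<Sum>i<k. lam l / real k)" using sum_split_k[OF kd] by simp
      also have "\<dots> = lam l" using k1 by simp
      finally show ?thesis .
    qed
    show "E ((1 / complex_of_nat k) \<cdot>\<^sub>m Pi_proj d k) $$ (a,b) = (U * diagm d lam * adj U) $$ (a,b)"
      unfolding Pi_diagm E_def q_def[symmetric] gen[OF ab] wq UDU_entry[OF Uc ab]
      by (rule sum.cong) (auto simp: ac_simps)
  qed (use Kc Uc in \<open>auto simp: E_def Pi_diagm intro!: msum_carrier[THEN carrier_matD(1)] msum_carrier[THEN carrier_matD(2)]\<close>)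
  then show ?thesis using ucp by blast
qed


lemma Pd_density: assumes d: "0 < d"
  shows "density d ((1 / complex_of_nat d) \<cdot>\<^sub>m Pi_proj d d)"
proof -
  define q where "q j = (if j < d then 1 / real d else 0)" for j
  have P: "(1 / complex_of_nat d) \<cdot>\<^sub>m Pi_proj d d = 1\<^sub>m d * diagm d q * adj (1\<^sub>m d)"
    unfolding Pi_diagm q_def[symmetric] by simp
  have c: "(1 / complex_of_nat d) \<cdot>\<^sub>m Pi_proj d d \<in> carrier_mat d d" by (simp add: Pi_proj_def)
  have h: "adj ((1 / complex_of_nat d) \<cdot>\<^sub>m Pi_proj d d) = (1 / complex_of_nat d) \<cdot>\<^sub>m Pi_proj d d"
    by (rule eq_matI) (auto simp: Pi_proj_def)
  have pos: "0 \<le> Re ((((1 / complex_of_nat d) \<cdot>\<^sub>m Pi_proj d d) *\<^sub>v v) \<bullet>c v)" if v: "v \<in> carrier_vec d" for v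
  proof -
    have "(((1 / complex_of_nat d) \<cdot>\<^sub>m Pi_proj d d) *\<^sub>v v) \<bullet>c v =
        complex_of_real (\<Sum>j<d. q j * (cmod (zz d (1\<^sub>m d) v j))^2)"
      unfolding qf_eq[OF c v] unfolding P by (rule qf_KDK) simp
    moreover have "0 \<le> (\<Sum>j<d. q j * (cmod (zz d (1\<^sub>m d) v j))^2)"
      by (intro sum_nonneg mult_nonneg_nonneg) (auto simp: q_def)
    ultimately show ?thesis by simp
  qed
  have "mtrace ((1 / complex_of_nat d) \<cdot>\<^sub>m Pi_proj d d) = (\<Sum>i<d. 1 / complex_of_nat d)"
    unfolding mtrace_def by (rule sum.cong) (auto simp: Pi_proj_def)
  also have "\<dots> = 1" using d by simp
  finally show ?thesis unfolding density_def psd_def using c h pos by blast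
qed

lemma rho_facts: assumes d: "0 < d" and rho: "density d \<rho>"
  shows "0 < lambda_max \<rho>" "1 / real d \<le> lambda_max \<rho>" "lambda_max \<rho> \<le> 1"
proof -
  obtain U lam where "unitary d U" "\<rho> = U * diagm d lam * adj U" "\<forall>l<d. 0 \<le> lam l"
    "(\<Sum>l<d. lam l) = 1" and M: "lambda_max \<rho> = Max (lam ` {..<d})"
    using density_spec[OF rho] by blast
  then show "0 < lambda_max \<rho>" "1 / real d \<le> lambda_max \<rho>" "lambda_max \<rho> \<le> 1"
    using max_facts[OF d] by auto
qed

lemma floor_facts: assumes d: "0 < d" and rho: "density d \<rho>"
  shows "1 \<le> \<lfloor>1 / lambda_max \<rho>\<rfloor>" "\<lfloor>1 / lambda_max \<rho>\<rfloor> \<le> int d"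
proof -
  note f = rho_facts[OF d rho]
  have "1 \<le> 1 / lambda_max \<rho>" using f by simp
  then show "1 \<le> \<lfloor>1 / lambda_max \<rho>\<rfloor>" by simp
  have "1 / lambda_max \<rho> \<le> real d" using f d by (simp add: field_simps)
  then show "\<lfloor>1 / lambda_max \<rho>\<rfloor> \<le> int d" by linarith
qed

lemma low_bound:
  assumes d: "0 < d" and k1: "1 \<le> k" and kd: "k \<le> d" and E: "unital_cptp d E"
    and rho: "density d (E ((1 / complex_of_nat k) \<cdot>\<^sub>m Pi_proj d k))"
  shows "real k \<le> real_of_int \<lfloor>1 / lambda_max (E ((1 / complex_of_nat k) \<cdot>\<^sub>m Pi_proj d k))\<rfloor>"
proof -
  let ?r = "E ((1 / complex_of_nat k) \<cdot>\<^sub>m Pi_proj d k)"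
  obtain U lam where U: "unitary d U" and r: "?r = U * diagm d lam * adj U" and nn: "\<forall>l<d. 0 \<le> lam l"
    and s1: "(\<Sum>l<d. lam l) = 1" and M: "lambda_max ?r = Max (lam ` {..<d})"
    using density_spec[OF rho] by blast
  have Uc: "U \<in> carrier_mat d d" using U unfolding unitary_def by auto
  have "\<forall>l<d. lam l \<le> 1 / real k"
  proof (intro allI impI)
    fix l assume l: "l < d"
    have cc: "col U l \<in> carrier_vec d" using Uc unfolding col_def by auto
    have "lam l = Re (qf d ?r (col U l))" unfolding r qf_col[OF U l] by simp
    also have "\<dots> \<le> (1 / real k) * (\<Sum>a<d. (cmod (col U l $ a))^2)" by (rule chan_bound[OF E cc])
    also have "\<dots> = 1 / real k" using col_norm[OF U l] by simp
    finally show "lam l \<le> 1 / real k" .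
  qed
  then have "lambda_max ?r \<le> 1 / real k" unfolding M using d by (subst Max_le_iff) auto
  moreover have "0 < lambda_max ?r" using rho_facts[OF d rho] by simp
  ultimately have "real k \<le> 1 / lambda_max ?r" using k1 by (simp add: field_simps)
  then have "int k \<le> \<lfloor>1 / lambda_max ?r\<rfloor>" by (simp add: le_floor_iff)
  then have "real_of_int (int k) \<le> real_of_int \<lfloor>1 / lambda_max ?r\<rfloor>" by (simp only: of_int_le_iff)
  then show ?thesis by simp
qed


theorem mainTheorem12:
  fixes d :: nat and V :: "complex mat set"
  assumes "0 < d" and "V \<noteq> {}" and "V \<subseteq> Omega d"
  shows "Cost d V = (INF \<rho>\<in>V. log 2 (real d / real_of_int \<lfloor>1 / lambda_max \<rho>\<rfloor>))
       \<and> Cost d V = log 2 (real d) - (SUP \<rho>\<in>V. log 2 (real_of_int \<lfloor>2 powr Hmin \<rho>\<rfloor>))"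
proof -
  have d: "0 < d" by fact
  define f where "f \<rho> = log 2 (real d / real_of_int \<lfloor>1 / lambda_max \<rho>\<rfloor>)" for \<rho>
  define g where "g \<rho> = log 2 (real_of_int \<lfloor>2 powr Hmin \<rho>\<rfloor>)" for \<rho>
  define S where "S = {v. \<exists>C. (C, v) \<in> currency d \<and> converts d C V}"
  define P where "P k = (1 / complex_of_nat k) \<cdot>\<^sub>m Pi_proj d k" for k
  have dens: "density d \<rho>" if "\<rho> \<in> V" for \<rho> using assms(3) that unfolding Omega_def by auto
  have fg: "f \<rho> = log 2 (real d) - g \<rho>" if r: "\<rho> \<in> V" for \<rho>
  proof -
    have M: "0 < lambda_max \<rho>" using rho_facts[OF d dens[OF r]] by simp
    have "2 powr Hmin \<rho> = 1 / lambda_max \<rho>"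
      unfolding Hmin_def powr_minus using M by (simp add: divide_inverse)
    moreover have "0 < real_of_int \<lfloor>1 / lambda_max \<rho>\<rfloor>" using floor_facts[OF d dens[OF r]] by simp
    ultimately show ?thesis unfolding f_def g_def using d by (simp add: log_divide_pos)
  qed
  have fk: "f \<rho> = log 2 (real d / real (nat \<lfloor>1 / lambda_max \<rho>\<rfloor>))"
    "1 \<le> nat \<lfloor>1 / lambda_max \<rho>\<rfloor>" "nat \<lfloor>1 / lambda_max \<rho>\<rfloor> \<le> d" if r: "\<rho> \<in> V" for \<rho>
  proof -
    have F: "1 \<le> \<lfloor>1 / lambda_max \<rho>\<rfloor>" "\<lfloor>1 / lambda_max \<rho>\<rfloor> \<le> int d"
      using floor_facts[OF d dens[OF r]] by auto
    have "real (nat \<lfloor>1 / lambda_max \<rho>\<rfloor>) = real_of_int \<lfloor>1 / lambda_max \<rho>\<rfloor>"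
      by (rule of_nat_nat) (use F(1) in linarith)
    then show "f \<rho> = log 2 (real d / real (nat \<lfloor>1 / lambda_max \<rho>\<rfloor>))" unfolding f_def by simp
    show "1 \<le> nat \<lfloor>1 / lambda_max \<rho>\<rfloor>" "nat \<lfloor>1 / lambda_max \<rho>\<rfloor> \<le> d" using F by linarith+
  qed
  have inS: "f \<rho> \<in> S" if r: "\<rho> \<in> V" for \<rho>
  proof -
    define k where "k = nat \<lfloor>1 / lambda_max \<rho>\<rfloor>"
    have k1: "1 \<le> k" and kd: "k \<le> d" using fk[OF r] unfolding k_def by auto
    have M: "0 < lambda_max \<rho>" using rho_facts[OF d dens[OF r]] by simp
    have "real k \<le> 1 / lambda_max \<rho>" unfolding k_def using floor_facts[OF d dens[OF r]]
      by (simp add: of_nat_nat) linarith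
    then have Mk: "lambda_max \<rho> \<le> 1 / real k" using M k1 by (simp add: field_simps)
    obtain U lam where U: "unitary d U" and rr: "\<rho> = U * diagm d lam * adj U" and nn: "\<forall>l<d. 0 \<le> lam l"
      and s1: "(\<Sum>l<d. lam l) = 1" and Mx: "lambda_max \<rho> = Max (lam ` {..<d})"
      using density_spec[OF dens[OF r]] by blast
    have "\<forall>l<d. lam l \<le> 1 / real k"
    proof (intro allI impI)
      fix l assume "l < d"
      then have "lam l \<le> Max (lam ` {..<d})" using max_facts(1)[OF d nn s1] by blast
      then show "lam l \<le> 1 / real k" using Mx Mk by linarith
    qed
    then obtain E where E: "unital_cptp d E" "E (P k) = \<rho>"
      using chan_construct[OF k1 kd U nn s1] rr unfolding P_def by metis
    have conv: "converts d {P k} V" unfolding converts_def using E r by auto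
    have cur: "({P k}, log 2 (real d) - log 2 (real k)) \<in> currency d"
      unfolding currency_def P_def using k1 kd by blast
    have "f \<rho> = log 2 (real d) - log 2 (real k)" unfolding fk(1)[OF r] k_def[symmetric]
      using k1 d by (simp add: log_divide_pos)
    then show ?thesis unfolding S_def using conv cur by (intro CollectI exI[of _ "{P k}"]) simp
  qed
  have lowk: "f (E (P k)) \<le> log 2 (real d) - log 2 (real k)" "E (P k) \<in> V"
    if k1: "1 \<le> k" and kd: "k \<le> d" and E: "unital_cptp d E" and EV: "E (P k) \<in> V" for k E
  proof -
    have lb: "real k \<le> real_of_int \<lfloor>1 / lambda_max (E (P k))\<rfloor>"
      unfolding P_def by (rule low_bound[OF d k1 kd E dens[OF EV, unfolded P_def]])
    have "f (E (P k)) = log 2 (real d / real_of_int \<lfloor>1 / lambda_max (E (P k))\<rfloor>)" by (simp add: f_def)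
    also have "\<dots> \<le> log 2 (real d / real k)"
    proof -
      have kp: "0 < real k" using k1 by simp
      have Fp: "0 < real_of_int \<lfloor>1 / lambda_max (E (P k))\<rfloor>" using lb kp by linarith
      have "real d / real_of_int \<lfloor>1 / lambda_max (E (P k))\<rfloor> \<le> real d / real k"
        using lb kp Fp by (intro divide_left_mono) auto
      moreover have "0 < real d / real_of_int \<lfloor>1 / lambda_max (E (P k))\<rfloor>" using Fp d by simp
      ultimately show ?thesis using kp d by simp
    qed
    also have "\<dots> = log 2 (real d) - log 2 (real k)" using k1 d by (simp add: log_divide_pos)
    finally show "f (E (P k)) \<le> log 2 (real d) - log 2 (real k)" .
    show "E (P k) \<in> V" by fact
  qed
  have lower: "\<exists>\<rho>\<in>V. f \<rho> \<le> v" if v: "v \<in> S" for v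
  proof -
    obtain C where C: "(C, v) \<in> currency d" "converts d C V" using v unfolding S_def by blast
    from C(1) consider (k) k where "C = {P k}" "v = log 2 (real d) - log 2 (real k)" "1 \<le> k" "k \<le> d"
      | (om) "C = Omega d" "v = 0"
      unfolding currency_def P_def by blast
    then show ?thesis
    proof cases
      case k
      obtain E where E: "unital_cptp d E" "E (P k) \<in> V" using C(2) k unfolding converts_def by auto
      show ?thesis using lowk[OF k(3,4) E] k by blast
    next
      case om
      have "P d \<in> Omega d" unfolding P_def Omega_def using Pd_density[OF d] by simp
      then obtain E where E: "unital_cptp d E" "E (P d) \<in> V" using C(2) om unfolding converts_def by auto
      show ?thesis using lowk[of d E] E d om by auto
    qed
  qed
  have fin: "finite (f ` V)"
  proof (rule finite_subset)
    show "f ` V \<subseteq> (\<lambda>j. log 2 (real d / real j)) ` {1..d}"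
      using fk by fastforce
  qed simp
  define m where "m = Min (f ` V)"
  have m_in: "m \<in> f ` V" unfolding m_def using fin assms(2) by (intro Min_in) auto
  have m_le: "m \<le> f \<rho>" if "\<rho> \<in> V" for \<rho> unfolding m_def using fin that by simp
  obtain \<rho>0 where r0: "\<rho>0 \<in> V" "f \<rho>0 = m" using m_in by auto
  have cost: "Cost d V = m"
    unfolding Cost_def S_def[symmetric]
  proof (rule cInf_eq_minimum)
    show "m \<in> S" using inS[OF r0(1)] r0(2) by simp
    fix x assume "x \<in> S"
    then obtain \<rho> where "\<rho> \<in> V" "f \<rho> \<le> x" using lower by blast
    then show "m \<le> x" using m_le by force
  qed
  have inf: "(INF \<rho>\<in>V. log 2 (real d / real_of_int \<lfloor>1 / lambda_max \<rho>\<rfloor>)) = m"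
    unfolding f_def[symmetric]
    by (rule cInf_eq_minimum) (use m_in m_le in auto)
  have sup: "(SUP \<rho>\<in>V. log 2 (real_of_int \<lfloor>2 powr Hmin \<rho>\<rfloor>)) = g \<rho>0"
    unfolding g_def[symmetric]
  proof (rule cSup_eq_maximum)
    show "g \<rho>0 \<in> g ` V" using r0 by simp
    fix x assume "x \<in> g ` V"
    then obtain \<rho> where r: "\<rho> \<in> V" "x = g \<rho>" by auto
    show "x \<le> g \<rho>0" using fg[OF r(1)] fg[OF r0(1)] m_le[OF r(1)] r0(2) r(2) by simp
  qed
  have "log 2 (real d) - g \<rho>0 = m" using fg[OF r0(1)] r0(2) by simp
  then show ?thesis using cost inf sup by simp
qed

end
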